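(* Let $\mathbf{K}$ be a finite field of characteristic $p>3$, let $(\alpha,\beta)\in\mathbf{K}^2$, let $G\in\mathbf{K}[[x]]$ be a formal power series and $H\in\mathbf{K}[z]$ a polynomial such that $H(\alpha)=1$ and $\beta^2=G(0)\neq 0$. Let $\mu\in\{1,\dots,p\}$. Then the following algorithm, on input $(\mu,(\alpha,\beta),H,G)$, returns the Taylor series modulo $x^\mu$ of the solution $S$ of the differential equation $$S'(x)^2=G(x)\,H(S(x)),\qquad S(0)=\alpha,\qquad S'(0)=\beta.$$ Algorithm: set $d\leftarrow 2$, $U\leftarrow 1/\beta$, $J\leftarrow 1$, $V\leftarrow 1$, and $S\leftarrow \alpha+\beta x+\big[(G'(0)+H'(\alpha)\beta^3)/(4\beta)\big]x^2$. While $d<\mu-1$, perform in order: $U\leftarrow U\cdot(2-S'\cdot U)\bmod x^d$; $V\leftarrow \big(V+J\cdot(H\circ S)\cdot(2-V\cdot J)\big)/2\bmod x^d$; $J\leftarrow J\cdot(2-V\cdot J)\bmod x^d$; $S\leftarrow S+V\cdot\int\big(G\cdot(H\circ S)-S'^2\big)\,\big(U\cdot J/2\big)\,dx\bmod x^{\min(2d+1,\mu)}$; $d\leftarrow 2d$. Finally return $S$.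
   Context: Here $'$ denotes the formal derivative with respect to $x$ (for $H$, with respect to $z$), $H\circ S$ is the composition $H(S(x))$, and $\int F\,dx$ denotes the formal antiderivative with zero constant term, $\int\sum_i c_i x^i\,dx=\sum_i \frac{c_i}{i+1}x^{i+1}$. All operations are on truncated power series over $\mathbf{K}$. *)

theory Defs
  imports "HOL-Computational_Algebra.Computational_Algebra" "HOL-Library.While_Combinator"
begin

text \<open>Composition H o S of a polynomial H with a power series S (S(0) arbitrary):
  evaluate H at S in the power series ring.\<close>
definition poly_comp_fps :: "'a::comm_ring_1 poly \<Rightarrow> 'a fps \<Rightarrow> 'a fps" where
  "poly_comp_fps H S = poly (map_poly fps_const H) S"

text \<open>Loop state: (d, U, J, V, S).\<close>
type_synonym 'a alg_state = "nat \<times> 'a fps \<times> 'a fps \<times> 'a fps \<times> 'a fps"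

definition alg_init :: "'a::field \<Rightarrow> 'a \<Rightarrow> 'a poly \<Rightarrow> 'a fps \<Rightarrow> 'a alg_state" where
  "alg_init \<alpha> \<beta> H G =
     (2, fps_const (1 / \<beta>), 1, 1,
      fps_const \<alpha> + fps_const \<beta> * fps_X
      + fps_const ((fps_deriv G $ 0 + poly (pderiv H) \<alpha> * \<beta> ^ 3) / (4 * \<beta>)) * fps_X ^ 2)"

definition alg_step :: "nat \<Rightarrow> 'a::field poly \<Rightarrow> 'a fps \<Rightarrow> 'a alg_state \<Rightarrow> 'a alg_state" where
  "alg_step \<mu> H G st =
     (case st of (d, U, J, V, S) \<Rightarrow>
       let U' = fps_cutoff d (U * (2 - fps_deriv S * U));
           V' = fps_cutoff d (fps_const (1/2) * (V + J * poly_comp_fps H S * (2 - V * J)));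
           J' = fps_cutoff d (J * (2 - V' * J));
           S' = fps_cutoff (min (2 * d + 1) \<mu>)
                  (S + V' * fps_integral
                      ((G * poly_comp_fps H S - (fps_deriv S)\<^sup>2) * (fps_const (1/2) * U' * J')) 0)
       in (2 * d, U', J', V', S'))"

definition alg :: "nat \<Rightarrow> 'a::field \<Rightarrow> 'a \<Rightarrow> 'a poly \<Rightarrow> 'a fps \<Rightarrow> 'a fps" where
  "alg \<mu> \<alpha> \<beta> H G =
     snd (snd (snd (snd (while (\<lambda>st. fst st < \<mu> - 1) (alg_step \<mu> H G) (alg_init \<alpha> \<beta> H G)))))"

text \<open>S solves S'^2 = G * (H o S), S(0)=alpha, S'(0)=beta, modulo x^(mu-1)
  (the equation for S' up to the precision that determines S modulo x^mu).\<close>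
definition ode_sol_mod :: "nat \<Rightarrow> 'a::field \<Rightarrow> 'a \<Rightarrow> 'a poly \<Rightarrow> 'a fps \<Rightarrow> 'a fps \<Rightarrow> bool" where
  "ode_sol_mod \<mu> \<alpha> \<beta> H G S \<longleftrightarrow>
     S $ 0 = \<alpha> \<and> fps_deriv S $ 0 = \<beta> \<and>
     fps_cutoff (\<mu> - 1) ((fps_deriv S)\<^sup>2) = fps_cutoff (\<mu> - 1) (G * poly_comp_fps H S)"

end

theory Submission
  imports Defs
begin

definition zo :: "nat \<Rightarrow> 'a::comm_ring_1 fps \<Rightarrow> bool" where
  "zo n a \<longleftrightarrow> (\<forall>i<n. a $ i = 0)"

lemma zo_0[simp]: "zo 0 a" "zo n 0" by (auto simp: zo_def)

lemma zo_mono: "zo k a \<Longrightarrow> n \<le> k \<Longrightarrow> zo n a" by (auto simp: zo_def)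

lemma zo_add: "zo n a \<Longrightarrow> zo n b \<Longrightarrow> zo n (a + b)" by (auto simp: zo_def)
lemma zo_diff: "zo n a \<Longrightarrow> zo n b \<Longrightarrow> zo n (a - b)" by (auto simp: zo_def)
lemma zo_uminus: "zo n a \<Longrightarrow> zo n (- a)" by (auto simp: zo_def)

lemma zo_mult: assumes "zo k a" "zo m b" shows "zo (k + m) (a * b)"
  unfolding zo_def
proof (intro allI impI)
  fix i assume i: "i < k + m"
  have "(a * b) $ i = (\<Sum>j=0..i. a$j * b$(i - j))" by (simp add: fps_mult_nth)
  also have "\<dots> = 0"
  proof (rule sum.neutral, intro ballI)
    fix j assume "j \<in> {0..i}"
    show "a$j * b$(i-j) = 0"
    proof (cases "j < k")
      case True then show ?thesis using assms(1) by (simp add: zo_def)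
    next
      case False then have "i - j < m" using i \<open>j \<in> {0..i}\<close> by auto
      then show ?thesis using assms(2) by (simp add: zo_def)
    qed
  qed
  finally show "(a * b) $ i = 0" .
qed

lemma zo_mult_left: "zo k a \<Longrightarrow> zo k (a * b)" using zo_mult[of k a 0 b] by simp
lemma zo_mult_right: "zo k b \<Longrightarrow> zo k (a * b)" using zo_mult[of 0 a k b] by simp

lemma zo_deriv: "zo (Suc k) a \<Longrightarrow> zo k (fps_deriv a)" by (auto simp: zo_def)

lemma zo_integral: "zo k a \<Longrightarrow> zo (Suc k) (fps_integral a 0)"
  unfolding zo_def by (auto simp: less_Suc_eq_0_disj)

lemma zo_cutoff: "zo n (fps_cutoff n a - a)" by (auto simp: zo_def)

lemma zo_cancel:
  fixes a :: "'a::field fps"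
  assumes "a $ 0 \<noteq> 0" "zo n (a * X)" shows "zo n X"
proof -
  have eq: "X = inverse a * (a * X)" using inverse_mult_eq_1[OF assms(1)] by (metis mult.assoc mult_1)
  moreover have "zo n (inverse a * (a * X))" by (rule zo_mult_right[OF assms(2)])
  ultimately show ?thesis by (simp only: eq[symmetric])
qed

lemma zo_deriv_integral:
  fixes a :: "'a::field fps"
  assumes "K < CHAR('a) \<or> CHAR('a) = 0"
  shows "zo K (fps_deriv (fps_integral a 0) - a)"
  unfolding zo_def
proof (intro allI impI)
  fix i assume i: "i < K"
  have "(of_nat (Suc i) :: 'a) \<noteq> 0"
  proof
    assume "(of_nat (Suc i) :: 'a) = 0"
    then have "CHAR('a) dvd Suc i" by (simp only: of_nat_eq_0_iff_char_dvd)
    then show False using assms i by (auto dest: dvd_imp_le)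
  qed
  then show "(fps_deriv (fps_integral a 0) - a) $ i = 0"
    by (simp add: fps_deriv_def)
qed

lemma zo_sq: "zo k a \<Longrightarrow> zo (k + k) (a^2)" by (simp add: power2_eq_square zo_mult)

lemma zo_one_minus_prod: "zo n (a - 1) \<Longrightarrow> zo n (b - 1) \<Longrightarrow> zo n (a * b - 1)"
proof -
  assume "zo n (a - 1)" "zo n (b - 1)"
  moreover have "a * b - 1 = (a - 1) * b + (b - 1)" by (simp add: algebra_simps)
  ultimately show ?thesis by (metis zo_add zo_mult_left)
qed

context fixes dummy :: "'a::field" begin end
lemma comp_pCons: "poly_comp_fps (pCons c p) (S::'a::field fps) = fps_const c + S * poly_comp_fps p S"
  by (simp add: poly_comp_fps_def map_poly_pCons)

lemma comp_0: "poly_comp_fps 0 (S::'a::field fps) = 0" by (simp add: poly_comp_fps_def)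

lemma comp_add: "poly_comp_fps (p + q) (S::'a::field fps) = poly_comp_fps p S + poly_comp_fps q S"
  proof -
  have "map_poly fps_const (p + q) = map_poly fps_const p + map_poly fps_const q"
    by (rule poly_eqI) (simp add: coeff_map_poly)
  then show ?thesis by (simp add: poly_comp_fps_def)
qed

lemma comp_nth0: "poly_comp_fps H (S::'a::field fps) $ 0 = poly H (S $ 0)"
  by (induction H) (simp_all add: comp_pCons comp_0)

lemma comp_deriv: "fps_deriv (poly_comp_fps H (S::'a::field fps)) = poly_comp_fps (pderiv H) S * fps_deriv S"
proof (induction H)
  case 0 then show ?case by (simp add: comp_0)
next
  case (pCons c p)
  show ?case using pCons(2)
    by (simp add: comp_pCons pderiv_pCons comp_add algebra_simps)
qed

lemma comp_taylor:
  "\<exists>Q. poly_comp_fps H ((S::'a::field fps) + e) = poly_comp_fps H S + poly_comp_fps (pderiv H) S * e + e^2 * Q"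
proof (induction H)
  case 0 then show ?case by (simp add: comp_0)
next
  case (pCons c p)
  then obtain Q where Q: "poly_comp_fps p (S + e) = poly_comp_fps p S + poly_comp_fps (pderiv p) S * e + e^2 * Q" by blast
  show ?case
    by (rule exI[of _ "S * Q + poly_comp_fps (pderiv p) S + e * Q"])
       (simp add: comp_pCons pderiv_pCons comp_add Q algebra_simps power2_eq_square)
qed

lemma zo_comp: "zo n ((S::'a::field fps) - T) \<Longrightarrow> zo n (poly_comp_fps H S - poly_comp_fps H T)"
proof -
  assume z: "zo n (S - T)"
  obtain Q where Q: "poly_comp_fps H (T + (S - T)) = poly_comp_fps H T + poly_comp_fps (pderiv H) T * (S - T) + (S - T)^2 * Q"
    using comp_taylor by blast
  have "poly_comp_fps H S - poly_comp_fps H T = (S - T) * (poly_comp_fps (pderiv H) T + (S - T) * Q)"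
    using Q by (simp add: algebra_simps power2_eq_square)
  then show ?thesis using zo_mult_left[OF z] by simp
qed


lemma cutoff_eq_zo: "fps_cutoff n a = fps_cutoff n b \<longleftrightarrow> zo n (a - b)"
  by (auto simp: zo_def fps_eq_iff)

lemma char_nz:
  assumes "0 < n" "n < CHAR('a::field)"
  shows "(of_nat n :: 'a) \<noteq> 0"
proof
  assume "(of_nat n :: 'a) = 0"
  then have "CHAR('a) dvd n" by (simp only: of_nat_eq_0_iff_char_dvd)
  then show False using assms by (auto dest: dvd_imp_le)
qed

lemma ode_unique:
  fixes S T G :: "'a::field fps"
  assumes two: "(2::'a) \<noteq> 0" and b: "\<beta> \<noteq> 0" and mu: "\<mu> \<le> CHAR('a)"
    and S: "ode_sol_mod \<mu> \<alpha> \<beta> H G S" and T: "ode_sol_mod \<mu> \<alpha> \<beta> H G T"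
  shows "zo \<mu> (S - T)"
proof -
  have S0: "S $ 0 = \<alpha>" "fps_deriv S $ 0 = \<beta>" and SE: "zo (\<mu> - 1) ((fps_deriv S)\<^sup>2 - G * poly_comp_fps H S)"
    using S by (auto simp: ode_sol_mod_def cutoff_eq_zo)
  have T0: "T $ 0 = \<alpha>" "fps_deriv T $ 0 = \<beta>" and TE: "zo (\<mu> - 1) ((fps_deriv T)\<^sup>2 - G * poly_comp_fps H T)"
    using T by (auto simp: ode_sol_mod_def cutoff_eq_zo)
  have "k \<le> \<mu> \<Longrightarrow> zo k (S - T)" for k
  proof (induction k)
    case 0 then show ?case by simp
  next
    case (Suc k)
    then have IH: "zo k (S - T)" by simp
    show ?case
    proof (cases "k = 0")
      case True then show ?thesis using S0 T0 by (simp add: zo_def)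
    next
      case False
      have k1: "k \<le> \<mu> - 1" using Suc.prems by simp
      have "zo k (G * (poly_comp_fps H S - poly_comp_fps H T))"
        by (rule zo_mult_right, rule zo_comp, rule IH)
      moreover have "zo k (((fps_deriv S)\<^sup>2 - G * poly_comp_fps H S) - ((fps_deriv T)\<^sup>2 - G * poly_comp_fps H T))"
        using zo_diff[OF SE TE] zo_mono k1 by blast
      ultimately have "zo k (((fps_deriv S)\<^sup>2 - G * poly_comp_fps H S) - ((fps_deriv T)\<^sup>2 - G * poly_comp_fps H T)
          + G * (poly_comp_fps H S - poly_comp_fps H T))" by (rule zo_add[rotated])
      moreover have "((fps_deriv S)\<^sup>2 - G * poly_comp_fps H S) - ((fps_deriv T)\<^sup>2 - G * poly_comp_fps H T)
          + G * (poly_comp_fps H S - poly_comp_fps H T) = (fps_deriv S + fps_deriv T) * fps_deriv (S - T)"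
        by (simp add: algebra_simps power2_eq_square)
      ultimately have z: "zo k ((fps_deriv S + fps_deriv T) * fps_deriv (S - T))" by simp
      have "(fps_deriv S + fps_deriv T) $ 0 \<noteq> 0" using S0 T0 two b
        by (simp flip: mult_2)
      from zo_cancel[OF this z] have "zo k (fps_deriv (S - T))" .
      then have "fps_deriv (S - T) $ (k - 1) = 0" unfolding zo_def using False
        by (meson diff_less neq0_conv zero_less_one)
      then have "of_nat k * (S - T) $ k = 0" using False by (simp add: fps_deriv_def)
      moreover have "(of_nat k :: 'a) \<noteq> 0" using char_nz[of k, where 'a='a] False Suc.prems mu by simp
      ultimately have "(S - T) $ k = 0" by simp
      then show ?thesis using IH by (auto simp: zo_def less_Suc_eq)
    qed
  qed
  then show ?thesis by simp
qed


definition inv :: "nat \<Rightarrow> 'a::field \<Rightarrow> 'a \<Rightarrow> 'a poly \<Rightarrow> 'a fps \<Rightarrow> 'a alg_state \<Rightarrow> bool" where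
  "inv \<mu> \<alpha> \<beta> H G st \<longleftrightarrow> (case st of (d, U, J, V, S) \<Rightarrow>
     (\<exists>m. d = 2 * m \<and> 1 \<le> m \<and> zo m (U * fps_deriv S - 1) \<and> zo m (V * J - 1)
        \<and> zo m (V\<^sup>2 - poly_comp_fps H S)
        \<and> zo (min d (\<mu> - 1)) ((fps_deriv S)\<^sup>2 - G * poly_comp_fps H S)
        \<and> S $ 0 = \<alpha> \<and> fps_deriv S $ 0 = \<beta>))"

lemma inv_init:
  fixes \<alpha> \<beta> :: "'a::field"
  assumes four: "(4::'a) \<noteq> 0" and H: "poly H \<alpha> = 1" and b: "\<beta>\<^sup>2 = G $ 0" "\<beta> \<noteq> 0"
  shows "inv \<mu> \<alpha> \<beta> H G (alg_init \<alpha> \<beta> H G)"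
proof -
  define c where "c = (fps_deriv G $ 0 + poly (pderiv H) \<alpha> * \<beta> ^ 3) / (4 * \<beta>)"
  define S where "S = fps_const \<alpha> + fps_const \<beta> * fps_X + fps_const c * fps_X ^ 2"
  have init: "alg_init \<alpha> \<beta> H G = (2, fps_const (1/\<beta>), 1, 1, S)"
    by (simp add: alg_init_def S_def c_def)
  have S0: "S $ 0 = \<alpha>" "S $ 1 = \<beta>" "S $ 2 = c" by (simp_all add: S_def)
  have D0: "fps_deriv S $ 0 = \<beta>" "fps_deriv S $ 1 = 2 * c"
    by (simp_all add: S_def fps_deriv_def)
  have Hs0: "poly_comp_fps H S $ 0 = 1" using H S0 by (simp add: comp_nth0)
  have Hs1: "poly_comp_fps H S $ 1 = poly (pderiv H) \<alpha> * \<beta>"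
  proof -
    have "poly_comp_fps H S $ 1 = fps_deriv (poly_comp_fps H S) $ 0" by (simp add: fps_deriv_def)
    also have "\<dots> = poly (pderiv H) \<alpha> * \<beta>" using S0 D0 by (simp add: comp_deriv comp_nth0)
    finally show ?thesis .
  qed
  have c4: "4 * \<beta> * c = fps_deriv G $ 0 + poly (pderiv H) \<alpha> * \<beta> ^ 3"
    using four b by (simp add: c_def)
  have E: "zo 2 ((fps_deriv S)\<^sup>2 - G * poly_comp_fps H S)"
    unfolding zo_def
  proof (intro allI impI)
    fix i :: nat assume "i < 2"
    then consider "i = 0" | "i = 1" by linarith
    then show "((fps_deriv S)\<^sup>2 - G * poly_comp_fps H S) $ i = 0"
    proof cases
      case 1 then show ?thesis using b Hs0 D0 by (simp add: power2_eq_square)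
    next
      case 2
      have "((fps_deriv S)\<^sup>2) $ 1 = 4 * \<beta> * c" 
        using D0(1) D0(2)[unfolded One_nat_def] by (simp add: power2_eq_square fps_mult_nth del: fps_deriv_nth)
      moreover have "(G * poly_comp_fps H S) $ 1 = G $ 0 * (poly (pderiv H) \<alpha> * \<beta>) + G $ 1"
        using Hs0 Hs1 by (simp add: fps_mult_nth)
      moreover have "((fps_deriv S)\<^sup>2 - G * poly_comp_fps H S) $ 1 = ((fps_deriv S)\<^sup>2) $ 1 - (G * poly_comp_fps H S) $ 1"
        by (simp only: fps_sub_nth)
      moreover have "fps_deriv G $ 0 = G $ 1" by simp
      ultimately have "((fps_deriv S)\<^sup>2 - G * poly_comp_fps H S) $ 1 = 
         (fps_deriv G $ 0 + poly (pderiv H) \<alpha> * \<beta> ^ 3) - (\<beta>\<^sup>2 * (poly (pderiv H) \<alpha> * \<beta>) + fps_deriv G $ 0)"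
        using c4 b by simp
      also have "\<dots> = 0" by (simp add: power3_eq_cube power2_eq_square)
      finally show ?thesis using 2 by simp
    qed
  qed
  show ?thesis unfolding init inv_def
    apply (simp only: prod.case)
    apply (rule exI[of _ 1])
    using b S0 D0 Hs0 zo_mono[OF E] by (auto simp: zo_def)
qed

lemma half_two: "(2::'a::field) \<noteq> 0 \<Longrightarrow> fps_const (1/2::'a) * 2 = 1"
  by (simp add: fps_eq_iff fps_numeral_nth)

lemma main_identity:
  fixes D dl V1 V1' I f r F G Hs Hp \<delta> Q c U1 J1 X :: "'a::comm_ring_1"
  assumes hdl: "dl = V1' * I + V1 * (f + r)" and hf: "f = (G * Hs - D\<^sup>2) * (c * U1 * J1)"
    and hF: "F = D\<^sup>2 - G * Hs" and hX: "X = 2 * D * V1' - G * Hp * V1" and hd: "\<delta> = V1 * I"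
  shows "(D + dl)\<^sup>2 - G * (Hs + Hp * \<delta> + \<delta>\<^sup>2 * Q) =
    - (F * ((U1 * D) * (V1 * J1) - 1)) + X * I + 2 * D * V1 * r + dl\<^sup>2
        - G * \<delta>\<^sup>2 * Q + (1 - c * 2) * (F * (U1 * D) * (V1 * J1))"
proof -
  have e1: "(D + dl)\<^sup>2 - G * (Hs + Hp * \<delta> + \<delta>\<^sup>2 * Q) = F + 2 * D * dl + dl\<^sup>2 - G * Hp * \<delta> - G * \<delta>\<^sup>2 * Q"
    by (simp add: hF algebra_simps power2_eq_square)
  have e2: "2 * D * dl = 2 * D * V1' * I + 2 * D * V1 * (f + r)" by (simp add: hdl algebra_simps)
  show ?thesis unfolding e1 e2
    by (simp add: hf hF hX hd algebra_simps power2_eq_square)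
qed

lemma inv_step:
  fixes G :: "'a::field fps"
  assumes two: "(2::'a) \<noteq> 0" and mu: "\<mu> \<le> CHAR('a)" and H: "poly H \<alpha> = 1"
    and I: "inv \<mu> \<alpha> \<beta> H G (d, U, J, V, S)" and dl: "d < \<mu> - 1"
  shows "inv \<mu> \<alpha> \<beta> H G (alg_step \<mu> H G (d, U, J, V, S))"
proof -
  define D where "D = fps_deriv S"
  define Hs where "Hs = poly_comp_fps H S"
  define Hp where "Hp = poly_comp_fps (pderiv H) S"
  define F where "F = D\<^sup>2 - G * Hs"
  define c where "c = fps_const (1/2::'a)"
  define U1 where "U1 = fps_cutoff d (U * (2 - D * U))"
  define V1 where "V1 = fps_cutoff d (c * (V + J * Hs * (2 - V * J)))"
  define J1 where "J1 = fps_cutoff d (J * (2 - V1 * J))"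
  define f where "f = (G * Hs - D\<^sup>2) * (c * U1 * J1)"
  define I where "I = fps_integral f 0"
  define \<delta> where "\<delta> = V1 * I"
  define S1 where "S1 = fps_cutoff (min (2 * d + 1) \<mu>) (S + \<delta>)"
  define K where "K = min (2 * d) (\<mu> - 1)"
  have c2: "c * 2 = 1" using half_two[OF two] by (simp add: c_def)
  from I obtain m where dm: "d = 2 * m" "1 \<le> m" and iU: "zo m (U * D - 1)"
    and iVJ: "zo m (V * J - 1)" and iV: "zo m (V\<^sup>2 - Hs)"
    and iF0: "zo (min d (\<mu> - 1)) F" and S0: "S $ 0 = \<alpha>" "D $ 0 = \<beta>"
    by (auto simp: inv_def D_def Hs_def F_def)
  have step: "alg_step \<mu> H G (d, U, J, V, S) = (2 * d, U1, J1, V1, S1)"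
    by (simp add: alg_step_def Let_def D_def Hs_def c_def U1_def V1_def J1_def f_def I_def \<delta>_def S1_def)
  have dd: "m + m = d" using dm by simp
  have hF: "zo d F" using iF0 dl by simp
  have Hs0: "Hs $ 0 = 1" using H S0 by (simp add: Hs_def comp_nth0)
  have V0: "V $ 0 \<noteq> 0"
  proof
    assume "V $ 0 = 0"
    then have "(V\<^sup>2 - Hs) $ 0 = -1" using Hs0 by (simp add: power2_eq_square)
    then show False using iV dm by (auto simp: zo_def)
  qed
  have hU1: "zo d (U1 * D - 1)"
  proof -
    have e: "U * (2 - D * U) * D - 1 = - ((U * D - 1)\<^sup>2)" by (simp add: algebra_simps power2_eq_square)
    have "zo d ((U * D - 1)\<^sup>2)" using zo_sq[OF iU] dd by simp
    then have a: "zo d (U * (2 - D * U) * D - 1)" unfolding e by (rule zo_uminus)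
    have b: "zo d ((U1 - U * (2 - D * U)) * D)" unfolding U1_def by (rule zo_mult_left, rule zo_cutoff)
    have "U1 * D - 1 = (U1 - U * (2 - D * U)) * D + (U * (2 - D * U) * D - 1)" by (simp add: algebra_simps)
    then show ?thesis using zo_add[OF b a] by (simp only:)
  qed
  define W where "W = V + J * Hs * (2 - V * J)"
  have V1W: "zo d (V1 - c * W)" unfolding V1_def W_def by (rule zo_cutoff)
  have hV1m: "zo m (V1 - V)"
  proof -
    have e: "c * W - V = c * (J * (2 - V * J) * (Hs - V\<^sup>2) - V * (V * J - 1)\<^sup>2) + (c * 2 - 1) * V"
      by (simp add: W_def algebra_simps power2_eq_square)
    have "zo m (J * (2 - V * J) * (Hs - V\<^sup>2) - V * (V * J - 1)\<^sup>2)"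
    proof (rule zo_diff)
      have "zo m (Hs - V\<^sup>2)" using zo_uminus[OF iV] by simp
      then show "zo m (J * (2 - V * J) * (Hs - V\<^sup>2))" by (rule zo_mult_right)
      show "zo m (V * (V * J - 1)\<^sup>2)" using zo_sq[OF iVJ] zo_mono[of "m+m" _ m]
        by (intro zo_mult_right) auto
    qed
    then have "zo m (c * W - V)" unfolding e c2 by (simp add: zo_mult_right)
    moreover have "zo m (V1 - c * W)" using V1W dd zo_mono by fastforce
    ultimately show ?thesis using zo_add by fastforce
  qed
  have V10: "V1 $ 0 = V $ 0" using hV1m dm by (auto simp: zo_def)
  have hV1sq: "zo d (V1\<^sup>2 - Hs)"
  proof -
    define e where "e = 1 - V * J"
    have ze: "zo m e" using zo_uminus[OF iVJ] by (simp add: e_def)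
    have id1: "V\<^sup>2 * (W\<^sup>2 - 4 * Hs) = (V\<^sup>2 - Hs)\<^sup>2 - 2 * (V\<^sup>2 + Hs) * Hs * e\<^sup>2 + Hs\<^sup>2 * (e\<^sup>2)\<^sup>2"
      by (simp add: W_def e_def algebra_simps power2_eq_square)
    have "zo d ((V\<^sup>2 - Hs)\<^sup>2)" using zo_sq[OF iV] dd by simp
    moreover have "zo d (2 * (V\<^sup>2 + Hs) * Hs * e\<^sup>2)" using zo_sq[OF ze] dd by (simp add: zo_mult_right)
    moreover have "zo d (Hs\<^sup>2 * (e\<^sup>2)\<^sup>2)"
    proof -
      have "zo d (e\<^sup>2)" using zo_sq[OF ze] dd by simp
      then have "zo d (Hs\<^sup>2 * (e\<^sup>2 * e\<^sup>2))" by (intro zo_mult_right zo_mult_left)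
      then show ?thesis by (simp only: power2_eq_square[of "e\<^sup>2"])
    qed
    ultimately have "zo d (V\<^sup>2 * (W\<^sup>2 - 4 * Hs))" unfolding id1 by (intro zo_add zo_diff)
    moreover have "(V\<^sup>2) $ 0 \<noteq> 0" using V0 by (simp add: power2_eq_square)
    ultimately have zW: "zo d (W\<^sup>2 - 4 * Hs)" using zo_cancel by blast
    have id2: "V1\<^sup>2 - Hs = (V1 - c * W) * (V1 + c * W) + c\<^sup>2 * (W\<^sup>2 - 4 * Hs) + ((c * 2)\<^sup>2 - 1) * Hs"
      by (simp add: algebra_simps power2_eq_square)
    show ?thesis unfolding id2 c2 using V1W zW by (simp add: zo_add zo_mult_left zo_mult_right)
  qed
  have hVJ1: "zo d (V1 * J1 - 1)"
  proof -
    have e1: "zo m (V1 * J - 1)"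
    proof -
      have "V1 * J - 1 = (V1 - V) * J + (V * J - 1)" by (simp add: algebra_simps)
      then show ?thesis using zo_add[OF zo_mult_left[OF hV1m] iVJ] by (simp only:)
    qed
    have e: "V1 * (J * (2 - V1 * J)) - 1 = - ((V1 * J - 1)\<^sup>2)" by (simp add: algebra_simps power2_eq_square)
    have a: "zo d (V1 * (J * (2 - V1 * J)) - 1)" unfolding e using zo_sq[OF e1] dd by (simp add: zo_uminus)
    have b: "zo d (V1 * (J1 - J * (2 - V1 * J)))" unfolding J1_def by (rule zo_mult_right, rule zo_cutoff)
    have "V1 * J1 - 1 = V1 * (J1 - J * (2 - V1 * J)) + (V1 * (J * (2 - V1 * J)) - 1)" by (simp add: algebra_simps)
    then show ?thesis using zo_add[OF b a] by (simp only:)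
  qed
  have d2: "2 \<le> d" using dm by simp
  have KC: "K < CHAR('a)" using mu dl by (simp add: K_def)
  have dK: "d + 1 \<le> K" using dl d2 by (simp add: K_def)
  have K1: "min (2 * d + 1) \<mu> = Suc K" using dl by (simp add: K_def)
  have hf: "zo d f"
  proof -
    have eq: "G * Hs - D\<^sup>2 = - F" by (simp add: F_def)
    show ?thesis unfolding f_def eq by (rule zo_mult_left[OF zo_uminus[OF hF]])
  qed
  have hI: "zo (Suc d) I" unfolding I_def by (rule zo_integral[OF hf])
  have hdel: "zo (Suc d) \<delta>" unfolding \<delta>_def by (rule zo_mult_right[OF hI])
  have hS1a: "zo (Suc K) (S1 - (S + \<delta>))" unfolding S1_def K1 by (rule zo_cutoff)
  have hS1b: "zo (Suc d) (S1 - S)"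
  proof -
    have "S1 - S = (S1 - (S + \<delta>)) + \<delta>" by simp
    moreover have "zo (Suc d) (S1 - (S + \<delta>))" using hS1a dK zo_mono by fastforce
    ultimately show ?thesis using zo_add[OF _ hdel] by metis
  qed
  define D1 where "D1 = fps_deriv S1"
  have hD1: "zo d (D1 - D)" using zo_deriv[OF hS1b] by (simp add: D1_def D_def)
  have hHs1: "zo (Suc d) (poly_comp_fps H S1 - Hs)" unfolding Hs_def by (rule zo_comp[OF hS1b])
  define r where "r = fps_deriv I - f"
  have hr: "zo K r" unfolding r_def I_def using zo_deriv_integral KC by blast
  define X where "X = 2 * D * fps_deriv V1 - G * Hp * V1"
  have hX: "zo (d - 1) X"
  proof -
    have dHs: "fps_deriv Hs = Hp * D" by (simp add: Hs_def Hp_def D_def comp_deriv)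
    have id: "V1 * X = D * fps_deriv (V1\<^sup>2 - Hs) + Hp * F - G * Hp * (V1\<^sup>2 - Hs)"
      by (simp add: X_def F_def dHs power2_eq_square algebra_simps)
    have s: "Suc (d - 1) = d" using d2 by simp
    have a: "zo (d - 1) (fps_deriv (V1\<^sup>2 - Hs))" by (rule zo_deriv, unfold s, rule hV1sq)
    have b: "zo (d - 1) F" using hF zo_mono by fastforce
    have c: "zo (d - 1) (V1\<^sup>2 - Hs)" using hV1sq zo_mono by fastforce
    have "zo (d - 1) (V1 * X)" unfolding id
      by (rule zo_diff[OF zo_add[OF zo_mult_right[OF a] zo_mult_right[OF b]] zo_mult_right[OF c]])
    then show ?thesis using zo_cancel[of V1] V10 V0 by auto
  qed
  have main: "zo K ((fps_deriv (S + \<delta>))\<^sup>2 - G * poly_comp_fps H (S + \<delta>))"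
  proof -
    obtain Q where Q: "poly_comp_fps H (S + \<delta>) = Hs + Hp * \<delta> + \<delta>\<^sup>2 * Q"
      using comp_taylor[of H S \<delta>] by (auto simp: Hs_def Hp_def)
    have dI: "fps_deriv I = f + r" by (simp add: r_def)
    have dd': "fps_deriv \<delta> = fps_deriv V1 * I + V1 * (f + r)" by (simp add: \<delta>_def dI)
    have id: "(fps_deriv (S + \<delta>))\<^sup>2 - G * poly_comp_fps H (S + \<delta>) =
        - (F * ((U1 * D) * (V1 * J1) - 1)) + X * I + 2 * D * V1 * r + (fps_deriv \<delta>)\<^sup>2
        - G * \<delta>\<^sup>2 * Q + (1 - c * 2) * (F * (U1 * D) * (V1 * J1))"
    proof -
      have "(fps_deriv (S + \<delta>))\<^sup>2 - G * poly_comp_fps H (S + \<delta>) =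
          (D + fps_deriv \<delta>)\<^sup>2 - G * (Hs + Hp * \<delta> + \<delta>\<^sup>2 * Q)" by (simp add: Q D_def)
      also have "\<dots> = - (F * ((U1 * D) * (V1 * J1) - 1)) + X * I + 2 * D * V1 * r + (fps_deriv \<delta>)\<^sup>2
        - G * \<delta>\<^sup>2 * Q + (1 - c * 2) * (F * (U1 * D) * (V1 * J1))"
        by (rule main_identity[OF dd' f_def F_def X_def \<delta>_def])
      finally show ?thesis .
    qed
    have t1: "zo K (F * ((U1 * D) * (V1 * J1) - 1))"
    proof -
      have "zo (d + d) (F * ((U1 * D) * (V1 * J1) - 1))"
        by (rule zo_mult[OF hF zo_one_minus_prod[OF hU1 hVJ1]])
      then show ?thesis by (rule zo_mono) (simp add: K_def)
    qed
    have t2: "zo K (X * I)"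
    proof -
      have "zo (d - 1 + Suc d) (X * I)" by (rule zo_mult[OF hX hI])
      then show ?thesis by (rule zo_mono) (use d2 in \<open>simp add: K_def\<close>)
    qed
    have t3: "zo K (2 * D * V1 * r)" by (rule zo_mult_right[OF hr])
    have t4: "zo K ((fps_deriv \<delta>)\<^sup>2)"
    proof -
      have "zo (d + d) ((fps_deriv \<delta>)\<^sup>2)" by (rule zo_sq[OF zo_deriv[OF hdel]])
      then show ?thesis by (rule zo_mono) (simp add: K_def)
    qed
    have t5: "zo K (G * \<delta>\<^sup>2 * Q)"
    proof -
      have "zo (Suc d + Suc d) (\<delta>\<^sup>2)" by (rule zo_sq[OF hdel])
      then have "zo K (\<delta>\<^sup>2)" by (rule zo_mono) (simp add: K_def)
      then show ?thesis by (simp add: zo_mult_left zo_mult_right mult.assoc)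
    qed
    show ?thesis unfolding id c2 using t1 t2 t3 t4 t5
      by (simp add: zo_add zo_diff zo_uminus)
  qed
  have newF: "zo K (D1\<^sup>2 - G * poly_comp_fps H S1)"
  proof -
    define D2 where "D2 = fps_deriv (S + \<delta>)"
    have a: "zo K (D1 - D2)"
    proof -
      have "zo K (fps_deriv (S1 - (S + \<delta>)))" by (rule zo_deriv[OF hS1a])
      then show ?thesis by (simp add: D1_def D2_def)
    qed
    have b: "zo K (G * (poly_comp_fps H S1 - poly_comp_fps H (S + \<delta>)))"
      by (rule zo_mult_right, rule zo_mono[OF zo_comp[OF hS1a]]) simp
    have "D1\<^sup>2 - G * poly_comp_fps H S1 = (D1 - D2) * (D1 + D2) + (D2\<^sup>2 - G * poly_comp_fps H (S + \<delta>))
       - G * (poly_comp_fps H S1 - poly_comp_fps H (S + \<delta>))"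
      by (simp add: algebra_simps power2_eq_square)
    then show ?thesis using zo_diff[OF zo_add[OF zo_mult_left[OF a] main[folded D2_def]] b] by (simp only:)
  qed
  have n1: "zo d (U1 * D1 - 1)"
  proof -
    have "U1 * D1 - 1 = U1 * (D1 - D) + (U1 * D - 1)" by (simp add: algebra_simps)
    then show ?thesis using zo_add[OF zo_mult_right[OF hD1] hU1] by (simp only:)
  qed
  have n3: "zo d (V1\<^sup>2 - poly_comp_fps H S1)"
  proof -
    have "V1\<^sup>2 - poly_comp_fps H S1 = (V1\<^sup>2 - Hs) - (poly_comp_fps H S1 - Hs)" by simp
    then show ?thesis using zo_diff[OF hV1sq zo_mono[OF hHs1]] by (simp only:)
  qed
  have n5: "S1 $ 0 = \<alpha>" using hS1b S0 by (auto simp: zo_def)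
  have n6: "D1 $ 0 = \<beta>" using hD1 S0 d2 by (auto simp: zo_def)
  show ?thesis unfolding step inv_def
    apply (simp only: prod.case)
    apply (rule exI[of _ d])
    using d2 n1 hVJ1 n3 newF n5 n6 by (simp add: D1_def K_def)
qed
theorem proposition3p1:
  fixes \<alpha> \<beta> :: "'a::{field,finite}" and G :: "'a fps" and H :: "'a poly" and \<mu> :: nat
  assumes "CHAR('a) > 3"
    and "poly H \<alpha> = 1"
    and "\<beta>\<^sup>2 = G $ 0" and "G $ 0 \<noteq> 0"
    and "1 \<le> \<mu>" and "\<mu> \<le> CHAR('a)"
  shows "(\<exists>S. ode_sol_mod \<mu> \<alpha> \<beta> H G S) \<and>
         (\<forall>S. ode_sol_mod \<mu> \<alpha> \<beta> H G S \<longrightarrow> fps_cutoff \<mu> (alg \<mu> \<alpha> \<beta> H G) = fps_cutoff \<mu> S)"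
proof -
  have two: "(2::'a) \<noteq> 0" using char_nz[of 2, where 'a='a] assms(1) by simp
  have f4: "(4::'a) = 2 * 2" by simp
  have four: "(4::'a) \<noteq> 0" unfolding f4 using two by (simp only: mult_eq_0_iff) simp
  have b: "\<beta> \<noteq> 0" using assms(3,4) by auto
  define P where "P = inv \<mu> \<alpha> \<beta> H G"
  have sol: "ode_sol_mod \<mu> \<alpha> \<beta> H G (snd (snd (snd (snd
      (while (\<lambda>st. fst st < \<mu> - 1) (alg_step \<mu> H G) (alg_init \<alpha> \<beta> H G))))))"
  proof (rule while_rule[where P = P and r = "measure (\<lambda>st. \<mu> - fst st)"])
    show "P (alg_init \<alpha> \<beta> H G)" unfolding P_def by (rule inv_init[OF four assms(2,3) b])
  next
    fix st assume "P st" "fst st < \<mu> - 1"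
    then show "P (alg_step \<mu> H G st)" unfolding P_def
      using inv_step[OF two assms(6) assms(2)] by (cases st) auto
  next
    fix st assume Pst: "P st" and nb: "\<not> fst st < \<mu> - 1"
    obtain d U J V S where st: "st = (d, U, J, V, S)" by (cases st) auto
    from Pst nb show "ode_sol_mod \<mu> \<alpha> \<beta> H G (snd (snd (snd (snd st))))"
      unfolding P_def st inv_def ode_sol_mod_def cutoff_eq_zo by auto
  next
    show "wf (measure (\<lambda>st. \<mu> - fst st))" by simp
  next
    fix st assume Pst: "P st" and bb: "fst st < \<mu> - 1"
    obtain d U J V S where st: "st = (d, U, J, V, S)" by (cases st) auto
    from Pst have "1 \<le> d" unfolding P_def st inv_def by auto
    then show "(alg_step \<mu> H G st, st) \<in> measure (\<lambda>st. \<mu> - fst st)"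
      using bb by (simp add: st alg_step_def Let_def)
  qed
  then have solA: "ode_sol_mod \<mu> \<alpha> \<beta> H G (alg \<mu> \<alpha> \<beta> H G)" by (simp add: alg_def)
  show ?thesis
  proof (intro conjI allI impI)
    show "\<exists>S. ode_sol_mod \<mu> \<alpha> \<beta> H G S" using solA by blast
  next
    fix S assume "ode_sol_mod \<mu> \<alpha> \<beta> H G S"
    from ode_unique[OF two b assms(6) solA this] show "fps_cutoff \<mu> (alg \<mu> \<alpha> \<beta> H G) = fps_cutoff \<mu> S"
      by (simp add: cutoff_eq_zo)
  qed
qed
end
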